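(* Let $\mathcal{A}$ be a finite alphabet and $\mathbf{p}$ an irreducible pair on $\mathcal{A}$. (1) If $\mathbf{q}$ is in the labeled extended Rauzy class of $\mathbf{p}$, then the quadratic forms $\mathcal{Q}_{\mathbf{p}}$ and $\mathcal{Q}_{\mathbf{q}}$ are equivalent. (2) If $\mathbf{q}=(q_0,q_1)$ is a pair on an alphabet $\mathcal{A}'$ such that the permutation $q_1\circ q_0^{-1}$ lies in the non-labeled extended Rauzy class of $\mathbf{p}$, then $\mathcal{Q}_{\mathbf{p}}$ and $\mathcal{Q}_{\mathbf{q}}$ are equivalent.
   Context: Let $n=\#\mathcal{A}$. A pair is $\mathbf{p}=(p_0,p_1)$ with $p_0,p_1:\mathcal{A}\to\{1,\dots,n\}$ bijections. Irreducible: $p_0^{-1}\{1,\dots,k\}\ne p_1^{-1}\{1,\dots,k\}$ for $1\le k<n$. Rauzy move of type $\varepsilon$: $\varepsilon\mathbf{p}=(p'_0,p'_1)$, $p'_\varepsilon=p_\varepsilon$, and for $z=p_\varepsilon^{-1}(n)$, $p'_{1-\varepsilon}(b)=p_{1-\varepsilon}(b)$ if $p_{1-\varepsilon}(b)\le p_{1-\varepsilon}(z)$, $=p_{1-\varepsilon}(b)+1$ if $p_{1-\varepsilon}(z)<p_{1-\varepsilon}(b)<n$, $=p_{1-\varepsilon}(z)+1$ if $p_{1-\varepsilon}(b)=n$. Left Rauzy move of type $\varepsilon$: $\tilde\varepsilon\mathbf{p}=(p'_0,p'_1)$, $p'_\varepsilon=p_\varepsilon$, and for $a=p_\varepsilon^{-1}(1)$,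 $p'_{1-\varepsilon}(b)=p_{1-\varepsilon}(a)-1$ if $p_{1-\varepsilon}(b)=1$, $=p_{1-\varepsilon}(b)-1$ if $1<p_{1-\varepsilon}(b)<p_{1-\varepsilon}(a)$, unchanged otherwise. The labeled extended Rauzy class of $\mathbf{p}$ is the set of pairs reachable from $\mathbf{p}$ by Rauzy and left Rauzy moves of both types; the non-labeled extended Rauzy class is its image under $(p_0,p_1)\mapsto p_1\circ p_0^{-1}\in\mathfrak{S}_n$. The canonical quadratic form of $\mathbf{p}$ is $\mathcal{Q}_{\mathbf{p}}:\mathbb{Z}_2^{\mathcal{A}}\to\mathbb{Z}_2$, $\mathcal{Q}_{\mathbf{p}}(v)=\sum_{a\in\mathcal{A}}v_a^2+\sum_{\{a,b\}}L_{\mathbf{p}}(a,b)v_av_b \pmod 2$, the second sum over unordered pairs of distinct letters, where $L_{\mathbf{p}}(a,b)=1$ if $(p_0(a)-p_0(b))(p_1(a)-p_1(b))<0$ and $0$ otherwise. Quadratic forms $\mathcal{Q}:\mathbb{Z}_2^{\mathcal{A}}\to\mathbb{Z}_2$ and $\mathcal{Q}':\mathbb{Z}_2^{\mathcal{A}'}\to\mathbb{Z}_2$ are equivalent if there is an invertible linear map $A:\mathbb{Z}_2^{\mathcal{A}}\to\mathbb{Z}_2^{\mathcal{A}'}$ with $\mathcal{Q}'\circ A=\mathcal{Q}$. *)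

theory Defs
  imports Main "HOL-Library.Z2" "HOL-Library.Cardinality"
begin

text \<open>A pair on the finite alphabet 'a (a finite type), n = CARD('a).
  A pair is represented as (p0, p1); the boolean eps encodes the type:
  False = 0, True = 1.\<close>

type_synonym 'a pair = "('a \<Rightarrow> nat) \<times> ('a \<Rightarrow> nat)"

definition is_pair :: "('a::finite) pair \<Rightarrow> bool" where
  "is_pair p \<longleftrightarrow> bij_betw (fst p) UNIV {1..CARD('a)} \<and> bij_betw (snd p) UNIV {1..CARD('a)}"

definition irreducible_pair :: "('a::finite) pair \<Rightarrow> bool" where
  "irreducible_pair p \<longleftrightarrow>
     (\<forall>k. 1 \<le> k \<and> k < CARD('a) \<longrightarrow>
        (fst p) -` {1..k} \<noteq> (snd p) -` {1..k})"

definition row :: "'a pair \<Rightarrow> bool \<Rightarrow> ('a \<Rightarrow> nat)" where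
  "row p e = (if e then snd p else fst p)"

definition mk_pair :: "bool \<Rightarrow> ('a \<Rightarrow> nat) \<Rightarrow> ('a \<Rightarrow> nat) \<Rightarrow> 'a pair" where
  "mk_pair e pe po = (if e then (po, pe) else (pe, po))"

definition rauzy_move :: "bool \<Rightarrow> ('a::finite) pair \<Rightarrow> 'a pair" where
  "rauzy_move e p =
    (let n = CARD('a); pe = row p e; po = row p (\<not> e);
         z = inv_into UNIV pe n;
         po' = (\<lambda>b. if po b \<le> po z then po b
                    else if po z < po b \<and> po b < n then po b + 1
                    else po z + 1)
     in mk_pair e pe po')"

definition left_rauzy_move :: "bool \<Rightarrow> ('a::finite) pair \<Rightarrow> 'a pair" where
  "left_rauzy_move e p =
    (let pe = row p e; po = row p (\<not> e);
         a = inv_into UNIV pe 1;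
         po' = (\<lambda>b. if po b = 1 then po a - 1
                    else if 1 < po b \<and> po b < po a then po b - 1
                    else po b)
     in mk_pair e pe po')"

definition rauzy_step :: "('a::finite) pair \<Rightarrow> 'a pair \<Rightarrow> bool" where
  "rauzy_step p q \<longleftrightarrow> (\<exists>e. q = rauzy_move e p \<or> q = left_rauzy_move e p)"

definition ext_rauzy_class :: "('a::finite) pair \<Rightarrow> 'a pair set" where
  "ext_rauzy_class p = {q. rauzy_step\<^sup>*\<^sup>* p q}"

text \<open>The permutation q1 o q0^{-1} of {1..n}, represented as the list of its
  values at 1, ..., n (so permutations of different degrees are distinct).\<close>
definition perm_of :: "('a::finite) pair \<Rightarrow> nat list" where
  "perm_of p = map (\<lambda>i. snd p (inv_into UNIV (fst p) i)) [1..<CARD('a) + 1]"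

definition nonlabeled_ext_rauzy_class :: "('a::finite) pair \<Rightarrow> nat list set" where
  "nonlabeled_ext_rauzy_class p = perm_of ` ext_rauzy_class p"

definition L_pair :: "'a pair \<Rightarrow> 'a \<Rightarrow> 'a \<Rightarrow> bool" where
  "L_pair p a b \<longleftrightarrow>
     (int (fst p a) - int (fst p b)) * (int (snd p a) - int (snd p b)) < 0"

text \<open>The sum over unordered pairs
  {a,b} of distinct letters is taken over ordered pairs (a,b) with p0 a < p0 b,
  which lists each unordered pair exactly once since p0 is injective.\<close>
definition Qform :: "('a::finite) pair \<Rightarrow> ('a \<Rightarrow> bit) \<Rightarrow> bit" where
  "Qform p v = (\<Sum>a\<in>UNIV. v a ^ 2) +
     (\<Sum>(a, b)\<in>{(a, b). a \<noteq> b \<and> fst p a < fst p b}.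
         (if L_pair p a b then 1 else 0) * v a * v b)"

definition z2_linear :: "(('a \<Rightarrow> bit) \<Rightarrow> ('b \<Rightarrow> bit)) \<Rightarrow> bool" where
  "z2_linear A \<longleftrightarrow>
     (\<forall>u v. A (\<lambda>x. u x + v x) = (\<lambda>y. A u y + A v y)) \<and>
     (\<forall>c u. A (\<lambda>x. c * u x) = (\<lambda>y. c * A u y))"

definition qf_equiv :: "(('a \<Rightarrow> bit) \<Rightarrow> bit) \<Rightarrow> (('b \<Rightarrow> bit) \<Rightarrow> bit) \<Rightarrow> bool" where
  "qf_equiv Q Q' \<longleftrightarrow> (\<exists>A. z2_linear A \<and> bij A \<and> Q' \<circ> A = Q)"

end

theory Submission
  imports Defs
begin


lemma bit_add_self[simp]: "x + x = (0::bit)" by (cases x) simp_all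
lemma bit_sq[simp]: "x^2 = (x::bit)" by (cases x) simp_all
lemma bit_cancel: "(a::bit) + y + (P + (y + R)) = a + P + R"
  by (cases a; cases y; cases P; cases R) simp_all
lemma bit_mult_self[simp]: "(y::bit) * y = y" by (cases y) simp_all
declare add_bit_eq_xor[simp del] mult_bit_eq_and[simp del] power_bit_unfold[simp del]

definition Sf :: "('a \<Rightarrow> nat) \<Rightarrow> ('a \<times> 'a) set" where
  "Sf f = {(a,b). a \<noteq> b \<and> f a < f b}"

lemma S_split:
  fixes f :: "'a::finite \<Rightarrow> nat" and g :: "'a \<Rightarrow> 'a \<Rightarrow> 'c::comm_monoid_add"
  assumes "inj f"
  shows "(\<Sum>(a,b)\<in>Sf f. g a b + g b a) = (\<Sum>(a,b)\<in>{(a,b). a \<noteq> b}. g a b)"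
proof -
  let ?sw = "\<lambda>(a::'a,b::'a). (b,a)"
  have D: "{(a,b). a \<noteq> b} = Sf f \<union> ?sw ` Sf f"
  proof -
    have fi: "\<And>a b. a \<noteq> b \<Longrightarrow> f a < f b \<or> f b < f a"
      using assms by (metis injD nat_neq_iff)
    show ?thesis
    proof (rule set_eqI, rule iffI)
      fix x :: "'a \<times> 'a" assume "x \<in> {(a,b). a \<noteq> b}"
      then obtain a b where x: "x = (a,b)" "a \<noteq> b" by auto
      then show "x \<in> Sf f \<union> ?sw ` Sf f"
        using fi[OF x(2)] unfolding Sf_def by (auto simp: image_iff)
    qed (auto simp: Sf_def)
  qed
  have disj: "Sf f \<inter> ?sw ` Sf f = {}" by (auto simp: Sf_def)
  have inj: "inj_on ?sw (Sf f)" by (auto simp: inj_on_def)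
  have "(\<Sum>(a,b)\<in>{(a,b). a \<noteq> b}. g a b) = (\<Sum>(a,b)\<in>Sf f. g a b) + (\<Sum>(a,b)\<in>?sw ` Sf f. g a b)"
    unfolding D by (rule sum.union_disjoint) (auto simp: disj)
  also have "(\<Sum>(a,b)\<in>?sw ` Sf f. g a b) = (\<Sum>(a,b)\<in>Sf f. g b a)"
    by (subst sum.reindex[OF inj]) (simp add: case_prod_beta comp_def)
  finally have X: "(\<Sum>(a,b)\<in>{(a,b). a \<noteq> b}. g a b) = (\<Sum>(a,b)\<in>Sf f. g a b) + (\<Sum>(a,b)\<in>Sf f. g b a)" .
  have Y: "(\<Sum>(a,b)\<in>Sf f. g a b + g b a) = (\<Sum>(a,b)\<in>Sf f. g a b) + (\<Sum>(a,b)\<in>Sf f. g b a)"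
    by (simp add: sum.distrib split_def)
  show ?thesis using X Y by simp
qed

lemma S_reorder:
  fixes f g :: "'a::finite \<Rightarrow> nat" and c :: "'a \<Rightarrow> 'a \<Rightarrow> 'c::comm_monoid_add"
  assumes "inj f" "inj g" "\<And>a b. c a b = c b a"
  shows "(\<Sum>(a,b)\<in>Sf f. c a b) = (\<Sum>(a,b)\<in>Sf g. c a b)"
proof (rule sum.reindex_bij_witness[where i="\<lambda>(a,b). if f a < f b then (a,b) else (b,a)"
      and j="\<lambda>(a,b). if g a < g b then (a,b) else (b,a)"])
  have fi: "\<And>a b. a \<noteq> b \<Longrightarrow> f a \<noteq> f b" "\<And>a b. a \<noteq> b \<Longrightarrow> g a \<noteq> g b"
    using assms(1,2) by (auto dest: injD)
  show "\<And>x. x \<in> Sf f \<Longrightarrow> (case (case x of (a, b) \<Rightarrow> if g a < g b then (a, b) else (b, a)) of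
                 (a, b) \<Rightarrow> if f a < f b then (a, b) else (b, a)) = x"
    by (auto simp: Sf_def)
  show "\<And>x. x \<in> Sf f \<Longrightarrow> (case x of (a, b) \<Rightarrow> if g a < g b then (a, b) else (b, a)) \<in> Sf g"
    using fi unfolding Sf_def by (auto split: if_splits) (meson nat_neq_iff)+
  show "\<And>x. x \<in> Sf g \<Longrightarrow> (case (case x of (a, b) \<Rightarrow> if f a < f b then (a, b) else (b, a)) of
                 (a, b) \<Rightarrow> if g a < g b then (a, b) else (b, a)) = x"
    by (auto simp: Sf_def)
  show "\<And>x. x \<in> Sf g \<Longrightarrow> (case x of (a, b) \<Rightarrow> if f a < f b then (a, b) else (b, a)) \<in> Sf f"
    using fi unfolding Sf_def by (auto split: if_splits) (meson nat_neq_iff)+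
  show "\<And>x. x \<in> Sf f \<Longrightarrow> (case (case x of (a, b) \<Rightarrow> if g a < g b then (a, b) else (b, a)) of (a, b) \<Rightarrow> c a b) = (case x of (a, b) \<Rightarrow> c a b)"
    using assms(3) by auto
qed

lemma D_delta:
  fixes k :: "'a::finite \<Rightarrow> 'c::comm_monoid_add"
  shows "(\<Sum>(a,b)\<in>{(a,b). a \<noteq> b}. if a = c then k b else 0) = (\<Sum>b\<in>UNIV - {c}. k b)"
proof -
  have e: "{(a,b). a \<noteq> b} = Sigma UNIV (\<lambda>a. UNIV - {a})" by auto
  have "(\<Sum>a\<in>UNIV. \<Sum>b\<in>UNIV - {a}. if a = c then k b else 0)
     = (\<Sum>(a,b)\<in>Sigma UNIV (\<lambda>a. UNIV - {a}). if a = c then k b else 0)"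
    by (rule sum.Sigma) auto
  then have "(\<Sum>(a,b)\<in>{(a,b). a \<noteq> b}. if a = c then k b else 0)
     = (\<Sum>a\<in>UNIV. \<Sum>b\<in>UNIV - {a}. if a = c then k b else 0)"
    by (simp only: e)
  also have "\<dots> = (\<Sum>a\<in>UNIV. if a = c then (\<Sum>b\<in>UNIV - {a}. k b) else 0)"
    by (rule sum.cong) auto
  also have "\<dots> = (\<Sum>b\<in>UNIV - {c}. k b)" by (simp add: sum.delta)
  finally show ?thesis .
qed

definition ell :: "'a pair \<Rightarrow> 'a \<Rightarrow> 'a \<Rightarrow> bit" where
  "ell p a b = (if L_pair p a b then 1 else 0)"

lemma L_pair_sym: "L_pair p a b = L_pair p b a"
proof -
  have "(int (fst p a) - int (fst p b)) * (int (snd p a) - int (snd p b))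
      = (int (fst p b) - int (fst p a)) * (int (snd p b) - int (snd p a))" by algebra
  then show ?thesis unfolding L_pair_def by simp
qed

lemma ell_sym: "ell p a b = ell p b a"
  unfolding ell_def using L_pair_sym by metis

lemma Qform_alt: "Qform p v = (\<Sum>a\<in>UNIV. v a) + (\<Sum>(a,b)\<in>Sf (fst p). ell p a b * v a * v b)"
  unfolding Qform_def Sf_def ell_def by simp

lemma sum_upd: "(\<Sum>a\<in>UNIV. (v(z := v z + v w)) a) = (\<Sum>a\<in>(UNIV::'a::finite set). v a) + (v w :: bit)"
proof -
  have "v(z := v z + v w) = (\<lambda>a. v a + (if a = z then v w else 0))" by auto
  then show ?thesis by (simp add: sum.distrib)
qed

lemma core:
  fixes p q :: "('a::finite) pair"
  assumes injp: "inj (fst p)" and injq: "inj (fst q)" and zw: "z \<noteq> w" and Lzw: "L_pair p z w"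
    and hL: "\<And>a b. a \<noteq> b \<Longrightarrow> ell q a b = ell p a b
        + (if a = w \<and> b \<noteq> z then ell p z b else 0) + (if b = w \<and> a \<noteq> z then ell p z a else 0)"
  shows "Qform q v = Qform p (v(z := v z + v w))"
proof -
  define u where "u = v(z := v z + v w)"
  define P where "P = (\<Sum>(a,b)\<in>Sf (fst p). ell p a b * v a * v b)"
  define R where "R = (\<Sum>b\<in>UNIV - {z} - {w}. ell p z b * v w * v b)"
  have ezw: "ell p z w = 1" using Lzw by (simp add: ell_def)
  let ?g = "\<lambda>a b. if a = z then ell p a b * v w * v b else 0"
  have "(\<Sum>(a,b)\<in>Sf (fst p). ell p a b * u a * u b)
      = (\<Sum>(a,b)\<in>Sf (fst p). ell p a b * v a * v b + (?g a b + ?g b a))"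
  proof (rule sum.cong[OF refl], clarify)
    fix a b assume "(a,b) \<in> Sf (fst p)"
    then have ab: "a \<noteq> b" by (simp add: Sf_def)
    show "ell p a b * u a * u b = ell p a b * v a * v b + (?g a b + ?g b a)"
      using ab ell_sym[of p a b] by (auto simp: u_def algebra_simps)
  qed
  also have "\<dots> = P + (\<Sum>(a,b)\<in>{(a,b). a \<noteq> b}. ?g a b)"
    unfolding P_def using S_split[OF injp, of ?g] by (simp add: sum.distrib split_def)
  also have "(\<Sum>(a,b)\<in>{(a,b). a \<noteq> b}. ?g a b) = (\<Sum>b\<in>UNIV - {z}. ell p z b * v w * v b)"
  proof -
    have "(\<Sum>(a,b)\<in>{(a,b). a \<noteq> b}. ?g a b) = (\<Sum>(a,b)\<in>{(a,b). a \<noteq> b}. if a = z then ell p z b * v w * v b else 0)"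
      by (rule sum.cong) auto
    then show ?thesis by (simp add: D_delta)
  qed
  also have "(\<Sum>b\<in>UNIV - {z}. ell p z b * v w * v b) = ell p z w * v w * v w + R"
    unfolding R_def using zw by (subst sum.remove[of _ w]) auto
  finally have X: "(\<Sum>(a,b)\<in>Sf (fst p). ell p a b * u a * u b) = P + (v w + R)"
    using ezw by (simp add: mult.assoc)
  have su: "(\<Sum>a\<in>UNIV. u a) = (\<Sum>a\<in>UNIV. v a) + v w" unfolding u_def by (rule sum_upd)
  have RS: "Qform p u = (\<Sum>a\<in>UNIV. v a) + P + R"
    unfolding Qform_alt su X by (rule bit_cancel)
  let ?h = "\<lambda>a b. if a = w then (if b \<noteq> z then ell p z b else 0) * v w * v b else 0"
  have "(\<Sum>(a,b)\<in>Sf (fst q). ell q a b * v a * v b) = (\<Sum>(a,b)\<in>Sf (fst p). ell q a b * v a * v b)"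
    by (rule S_reorder[OF injq injp]) (subst ell_sym, simp add: mult_ac)
  also have "\<dots> = (\<Sum>(a,b)\<in>Sf (fst p). ell p a b * v a * v b + (?h a b + ?h b a))"
  proof (rule sum.cong[OF refl], clarify)
    fix a b assume "(a,b) \<in> Sf (fst p)"
    then have ab: "a \<noteq> b" by (simp add: Sf_def)
    show "ell q a b * v a * v b = ell p a b * v a * v b + (?h a b + ?h b a)"
      using ab hL[OF ab] by (auto simp: algebra_simps)
  qed
  also have "\<dots> = P + (\<Sum>(a,b)\<in>{(a,b). a \<noteq> b}. ?h a b)"
    unfolding P_def using S_split[OF injp, of ?h] by (simp add: sum.distrib split_def)
  also have "(\<Sum>(a,b)\<in>{(a,b). a \<noteq> b}. ?h a b) = (\<Sum>b\<in>UNIV - {w}. (if b \<noteq> z then ell p z b else 0) * v w * v b)"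
    by (rule D_delta)
  also have "\<dots> = R"
    unfolding R_def using zw by (subst sum.remove[of _ z]) (auto intro!: sum.cong simp: Diff_insert2[symmetric] insert_commute)
  finally have LS: "Qform q v = (\<Sum>a\<in>UNIV. v a) + P + R"
    unfolding Qform_alt by (simp add: add.assoc)
  show ?thesis using LS RS u_def by simp
qed



lemma qf_refl: "qf_equiv Q Q"
  unfolding qf_equiv_def z2_linear_def by (rule exI[of _ id]) auto

lemma qf_trans: assumes "qf_equiv Q1 Q2" "qf_equiv Q2 Q3" shows "qf_equiv Q1 Q3"
proof -
  obtain A where A: "z2_linear A" "bij A" "Q2 \<circ> A = Q1" using assms(1) unfolding qf_equiv_def by blast
  obtain B where B: "z2_linear B" "bij B" "Q3 \<circ> B = Q2" using assms(2) unfolding qf_equiv_def by blast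
  have "z2_linear (B \<circ> A)" using A(1) B(1) unfolding z2_linear_def by simp
  moreover have "bij (B \<circ> A)" using A(2) B(2) by (rule bij_comp)
  moreover have "Q3 \<circ> (B \<circ> A) = Q1" unfolding o_assoc using A(3) B(3) by simp
  ultimately show ?thesis unfolding qf_equiv_def by blast
qed

lemma upd_lin: "z2_linear (\<lambda>v::'a \<Rightarrow> bit. v(z := v z + v w))"
  unfolding z2_linear_def by (auto simp: fun_eq_iff algebra_simps)

lemma upd_inv: "z \<noteq> w \<Longrightarrow> (\<lambda>v::'a \<Rightarrow> bit. v(z := v z + v w)) ((\<lambda>v. v(z := v z + v w)) u) = u"
  by (auto simp: fun_eq_iff add.assoc)

lemma upd_bij: assumes "z \<noteq> w" shows "bij (\<lambda>v::'a \<Rightarrow> bit. v(z := v z + v w))"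
  by (rule o_bij[where g="\<lambda>v::'a \<Rightarrow> bit. v(z := v z + v w)"]) (use assms in \<open>auto simp: fun_eq_iff\<close>)

lemma core_equiv:
  fixes p q :: "('a::finite) pair"
  assumes injp: "inj (fst p)" and injq: "inj (fst q)" and zw: "z \<noteq> w" and Lzw: "L_pair p z w"
    and hL: "\<And>a b. a \<noteq> b \<Longrightarrow> ell q a b = ell p a b
        + (if a = w \<and> b \<noteq> z then ell p z b else 0) + (if b = w \<and> a \<noteq> z then ell p z a else 0)"
  shows "qf_equiv (Qform p) (Qform q)"
  unfolding qf_equiv_def
proof (intro exI conjI)
  show "z2_linear (\<lambda>v::'a \<Rightarrow> bit. v(z := v z + v w))" by (rule upd_lin)
  show "bij (\<lambda>v::'a \<Rightarrow> bit. v(z := v z + v w))" using zw by (rule upd_bij)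
  show "Qform q \<circ> (\<lambda>v. v(z := v z + v w)) = Qform p"
  proof
    fix v
    show "(Qform q \<circ> (\<lambda>v. v(z := v z + v w))) v = Qform p v"
      using core[OF injp injq zw Lzw hL, of "v(z := v z + v w)"] upd_inv[OF zw, of v] by simp
  qed
qed

definition Lr :: "('a \<Rightarrow> nat) \<Rightarrow> ('a \<Rightarrow> nat) \<Rightarrow> 'a \<Rightarrow> 'a \<Rightarrow> bool" where
  "Lr pe po a b \<longleftrightarrow> (int (pe a) - int (pe b)) * (int (po a) - int (po b)) < 0"

lemma L_pair_mk: "L_pair (mk_pair e pe po) a b = Lr pe po a b"
  unfolding L_pair_def Lr_def mk_pair_def by (cases e) (auto simp: mult.commute)

lemma L_pair_row: "L_pair p a b = Lr (row p e) (row p (\<not> e)) a b"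
  unfolding L_pair_def Lr_def row_def by (cases e) (auto simp: mult.commute)

lemma mk_row: "mk_pair e (row p e) (row p (\<not> e)) = p"
  unfolding mk_pair_def row_def by (cases e) auto

lemma Lr_iff: assumes "inj pe" "inj po" "a \<noteq> b"
  shows "Lr pe po a b \<longleftrightarrow> ((pe a < pe b) \<noteq> (po a < po b))"
proof -
  have "pe a \<noteq> pe b" "po a \<noteq> po b" using assms by (auto dest: injD)
  then show ?thesis unfolding Lr_def mult_less_0_iff by auto
qed

lemma move_equiv:
  fixes p :: "('a::finite) pair"
  assumes pp: "is_pair p" and injo: "inj po'" and q: "q = mk_pair e (row p e) po'"
    and zw: "z \<noteq> w" and Lzw: "Lr (row p e) (row p (\<not> e)) z w"
    and cond: "\<And>a b. a \<noteq> b \<Longrightarrow> (Lr (row p e) po' a b \<longleftrightarrow> (Lr (row p e) (row p (\<not> e)) a b \<noteq>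
        ((a = w \<and> b \<noteq> z \<and> Lr (row p e) (row p (\<not> e)) z b) \<or> (b = w \<and> a \<noteq> z \<and> Lr (row p e) (row p (\<not> e)) z a))))"
  shows "qf_equiv (Qform p) (Qform q)"
proof (rule core_equiv)
  have ij: "inj (fst p)" "inj (snd p)" using pp unfolding is_pair_def by (auto dest: bij_betw_imp_inj_on)
  then show "inj (fst p)" by simp
  have "inj (row p e)" using ij by (simp add: row_def)
  then show "inj (fst q)" using injo q ij by (cases e) (simp_all add: mk_pair_def row_def)
  show "z \<noteq> w" by (rule zw)
  show "L_pair p z w" using Lzw by (simp add: L_pair_row[of p z w e])
  fix a b :: 'a assume ab: "a \<noteq> b"
  show "ell q a b = ell p a b
        + (if a = w \<and> b \<noteq> z then ell p z b else 0) + (if b = w \<and> a \<noteq> z then ell p z a else 0)"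
    unfolding ell_def q L_pair_mk L_pair_row[of p _ _ e] cond[OF ab] using ab by auto
qed



lemma right_arith:
  fixes pe po :: "'a \<Rightarrow> nat"
  assumes ie: "inj pe" and io: "inj po"
    and re: "\<And>x. 1 \<le> pe x \<and> pe x \<le> n" and ro: "\<And>x. 1 \<le> po x \<and> po x \<le> n"
    and z: "pe z = n" and w: "po w = n" and zw: "z \<noteq> w"
    and po': "po' = (\<lambda>b. if po b \<le> po z then po b
                    else if po z < po b \<and> po b < n then po b + 1
                    else po z + 1)"
  shows "inj po'" "\<And>x. 1 \<le> po' x \<and> po' x \<le> n" "Lr pe po z w"
    "\<And>a b. a \<noteq> b \<Longrightarrow> (Lr pe po' a b \<longleftrightarrow> (Lr pe po a b \<noteq>
        ((a = w \<and> b \<noteq> z \<and> Lr pe po z b) \<or> (b = w \<and> a \<noteq> z \<and> Lr pe po z a))))"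
proof -
  have ei: "\<And>a b. pe a = pe b \<longleftrightarrow> a = b" "\<And>a b. po a = po b \<longleftrightarrow> a = b"
    using ie io by (auto dest: injD)
  have zn: "po z < n" using ro[of z] w ei(2)[of z w] zw by auto
  show io': "inj po'"
  proof (rule injI)
    fix a b assume "po' a = po' b"
    then show "a = b" unfolding po' using ei(2)[of a b] ro[of a] ro[of b] w ei(2)[of a w] ei(2)[of b w]
      by (auto split: if_splits)
  qed
  show "\<And>x. 1 \<le> po' x \<and> po' x \<le> n" unfolding po' using ro zn by auto
  have pen: "\<And>x. x \<noteq> z \<Longrightarrow> pe x < n" using re z ei(1) by (metis le_neq_implies_less)
  have pon: "\<And>x. x \<noteq> w \<Longrightarrow> po x < n" using ro w ei(2) by (metis le_neq_implies_less)
  show "Lr pe po z w" using Lr_iff[OF ie io zw] pen[of w] zw z w zn by auto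
  fix a b :: 'a assume ab: "a \<noteq> b"
  have A: "Lr pe po' a b \<longleftrightarrow> ((pe a < pe b) \<noteq> (po' a < po' b))" by (rule Lr_iff[OF ie io' ab])
  have B: "Lr pe po a b \<longleftrightarrow> ((pe a < pe b) \<noteq> (po a < po b))" by (rule Lr_iff[OF ie io ab])
  have Cb: "b \<noteq> z \<Longrightarrow> Lr pe po z b \<longleftrightarrow> po z < po b" using Lr_iff[OF ie io, of z b] z pen[of b] by auto
  have Ca: "a \<noteq> z \<Longrightarrow> Lr pe po z a \<longleftrightarrow> po z < po a" using Lr_iff[OF ie io, of z a] z pen[of a] by auto
  have pab: "po a \<noteq> po b" using ab ei by auto
  show "Lr pe po' a b \<longleftrightarrow> (Lr pe po a b \<noteq>
        ((a = w \<and> b \<noteq> z \<and> Lr pe po z b) \<or> (b = w \<and> a \<noteq> z \<and> Lr pe po z a)))"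
    unfolding A B
    using Ca Cb pab pon[of a] pon[of b] w ab ei(2)[of a z] ei(2)[of b z]
    by (cases "a = w"; cases "b = w"; cases "a = z"; cases "b = z") (auto simp: po')
qed

lemma left_arith:
  fixes pe po :: "'a \<Rightarrow> nat"
  assumes ie: "inj pe" and io: "inj po"
    and re: "\<And>x. 1 \<le> pe x \<and> pe x \<le> n" and ro: "\<And>x. 1 \<le> po x \<and> po x \<le> n"
    and z: "pe z = 1" and w: "po w = 1" and zw: "z \<noteq> w"
    and po': "po' = (\<lambda>b. if po b = 1 then po z - 1
                    else if 1 < po b \<and> po b < po z then po b - 1
                    else po b)"
  shows "inj po'" "\<And>x. 1 \<le> po' x \<and> po' x \<le> n" "Lr pe po z w"
    "\<And>a b. a \<noteq> b \<Longrightarrow> (Lr pe po' a b \<longleftrightarrow> (Lr pe po a b \<noteq>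
        ((a = w \<and> b \<noteq> z \<and> Lr pe po z b) \<or> (b = w \<and> a \<noteq> z \<and> Lr pe po z a))))"
proof -
  have ei: "\<And>a b. pe a = pe b \<longleftrightarrow> a = b" "\<And>a b. po a = po b \<longleftrightarrow> a = b"
    using ie io by (auto dest: injD)
  have zn: "po z > 1" using ro[of z] w ei(2)[of z w] zw by auto
  show io': "inj po'"
  proof (rule injI)
    fix a b assume "po' a = po' b"
    then show "a = b" unfolding po' using ei(2)[of a b] ro[of a] ro[of b] w ei(2)[of a w] ei(2)[of b w]
      by (auto split: if_splits)
  qed
  show "\<And>x. 1 \<le> po' x \<and> po' x \<le> n"
  proof -
    fix x show "1 \<le> po' x \<and> po' x \<le> n" unfolding po' using ro[of x] ro[of z] zn by auto
  qed
  have pen: "\<And>x. x \<noteq> z \<Longrightarrow> pe x > 1" using re z ei(1) by (metis le_neq_implies_less)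
  have pon: "\<And>x. x \<noteq> w \<Longrightarrow> po x > 1" using ro w ei(2) by (metis le_neq_implies_less)
  show "Lr pe po z w" using Lr_iff[OF ie io zw] pen[of w] zw z w zn by auto
  fix a b :: 'a assume ab: "a \<noteq> b"
  have A: "Lr pe po' a b \<longleftrightarrow> ((pe a < pe b) \<noteq> (po' a < po' b))" by (rule Lr_iff[OF ie io' ab])
  have B: "Lr pe po a b \<longleftrightarrow> ((pe a < pe b) \<noteq> (po a < po b))" by (rule Lr_iff[OF ie io ab])
  have Cb: "b \<noteq> z \<Longrightarrow> Lr pe po z b \<longleftrightarrow> po b < po z" using Lr_iff[OF ie io, of z b] z pen[of b] ei(2)[of z b] by auto
  have Ca: "a \<noteq> z \<Longrightarrow> Lr pe po z a \<longleftrightarrow> po a < po z" using Lr_iff[OF ie io, of z a] z pen[of a] ei(2)[of z a] by auto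
  have pab: "po a \<noteq> po b" using ab ei by auto
  show "Lr pe po' a b \<longleftrightarrow> (Lr pe po a b \<noteq>
        ((a = w \<and> b \<noteq> z \<and> Lr pe po z b) \<or> (b = w \<and> a \<noteq> z \<and> Lr pe po z a)))"
    unfolding A B
    using Ca Cb pab pon[of a] pon[of b] w ab ei(2)[of a z] ei(2)[of b z] zn
    by (cases "a = w"; cases "b = w"; cases "a = z"; cases "b = z") (auto simp: po')
qed



definition Fp :: "('a::finite) pair \<Rightarrow> bool" where
  "Fp p \<longleftrightarrow> (\<forall>x. \<not> (fst p x = 1 \<and> snd p x = 1))"

definition Inv :: "('a::finite) pair \<Rightarrow> bool" where
  "Inv p \<longleftrightarrow> is_pair p \<and> Fp p"

lemma Fp_row: "Fp p \<longleftrightarrow> (\<forall>x. \<not> (row p e x = 1 \<and> row p (\<not> e) x = 1))"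
  unfolding Fp_def row_def by (cases e) auto

lemma Fp_mk: "Fp (mk_pair e pe po) \<longleftrightarrow> (\<forall>x. \<not> (pe x = 1 \<and> po x = 1))"
  unfolding Fp_def mk_pair_def by (cases e) auto

lemma is_pair_row: fixes p :: "('a::finite) pair"
  shows "is_pair p \<Longrightarrow> bij_betw (row p e) UNIV {1..CARD('a)}"
  unfolding is_pair_def row_def by (cases e) auto

lemma is_pair_mk: "bij_betw pe UNIV {1..CARD('a::finite)} \<Longrightarrow> bij_betw po UNIV {1..CARD('a)}
   \<Longrightarrow> is_pair (mk_pair e pe po :: 'a pair)"
  unfolding is_pair_def mk_pair_def by (cases e) auto

lemma bij_n: fixes f :: "'a::finite \<Rightarrow> nat"
  assumes "inj f" "\<And>x. 1 \<le> f x \<and> f x \<le> CARD('a)"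
  shows "bij_betw f UNIV {1..CARD('a)}"
proof -
  have "range f \<subseteq> {1..CARD('a)}" using assms(2) by auto
  moreover have "card (range f) = card {1..CARD('a)}" using assms(1) by (simp add: card_image)
  ultimately have "range f = {1..CARD('a)}" by (intro card_subset_eq) auto
  then show ?thesis using assms(1) by (simp add: bij_betw_def)
qed

lemma bij_facts: fixes f :: "'a::finite \<Rightarrow> nat"
  assumes "bij_betw f UNIV {1..CARD('a)}"
  shows "inj f" "\<And>x. 1 \<le> f x \<and> f x \<le> CARD('a)" "\<And>y. 1 \<le> y \<Longrightarrow> y \<le> CARD('a) \<Longrightarrow> f (inv_into UNIV f y) = y"
proof -
  show "inj f" using assms by (simp add: bij_betw_def)
  show "\<And>x. 1 \<le> f x \<and> f x \<le> CARD('a)" using assms by (auto simp: bij_betw_def)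
  show "\<And>y. 1 \<le> y \<Longrightarrow> y \<le> CARD('a) \<Longrightarrow> f (inv_into UNIV f y) = y"
    using assms by (auto simp: bij_betw_def intro!: f_inv_into_f)
qed

lemma card_pos: "1 \<le> CARD('a::finite)" by (simp add: Suc_le_eq)

lemma right_step:
  fixes p :: "('a::finite) pair"
  assumes I: "Inv p"
  shows "Inv (rauzy_move e p) \<and> qf_equiv (Qform p) (Qform (rauzy_move e p))"
proof -
  define n where "n = CARD('a)"
  define pe where "pe = row p e"
  define po where "po = row p (\<not> e)"
  define z where "z = inv_into UNIV pe n"
  define po' where "po' = (\<lambda>b. if po b \<le> po z then po b
                    else if po z < po b \<and> po b < n then po b + 1
                    else po z + 1)"
  have q: "rauzy_move e p = mk_pair e pe po'"
    unfolding rauzy_move_def Let_def n_def pe_def po_def z_def po'_def by simp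
  have bpe: "bij_betw pe UNIV {1..n}" and bpo: "bij_betw po UNIV {1..n}"
    using is_pair_row[of p e] is_pair_row[of p "\<not> e"] I unfolding Inv_def pe_def po_def n_def by blast+
  note fe = bij_facts[OF bpe[unfolded n_def], folded n_def]
  note fo = bij_facts[OF bpo[unfolded n_def], folded n_def]
  have n1: "1 \<le> n" by (simp add: n_def card_pos)
  have z: "pe z = n" unfolding z_def using fe(3) n1 by simp
  define w where "w = inv_into UNIV po n"
  have w: "po w = n" unfolding w_def using fo(3) n1 by simp
  have F: "\<forall>x. \<not> (pe x = 1 \<and> po x = 1)" using I Fp_row[of p e] unfolding Inv_def pe_def po_def by blast
  show ?thesis
  proof (cases "z = w")
    case True
    then have "po' = po" unfolding po'_def using w fo(2) by (auto simp: fun_eq_iff)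
    then have "rauzy_move e p = p" unfolding q pe_def po_def by (simp add: mk_row)
    then show ?thesis using I by (simp add: qf_refl)
  next
    case False
    note RA = right_arith[OF fe(1) fo(1) fe(2) fo(2) z w False po'_def]
    have inv: "Inv (rauzy_move e p)"
      unfolding Inv_def q
    proof
      show "is_pair (mk_pair e pe po')"
        using bpe bij_n[OF RA(1)] RA(2) unfolding n_def by (intro is_pair_mk) auto
      show "Fp (mk_pair e pe po')" unfolding Fp_mk
      proof -
        have pz: "0 < po z" using fo(2)[of z] by simp
        show "\<forall>x. \<not> (pe x = 1 \<and> po' x = 1)" using F fo(2) pz unfolding po'_def by (auto split: if_splits)
      qed
    qed
    have "qf_equiv (Qform p) (Qform (mk_pair e pe po'))"
      apply (rule move_equiv[of p po' _ e z w])
      using I RA \<open>z \<noteq> w\<close> unfolding Inv_def pe_def po_def by auto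
    then show ?thesis using inv q by simp
  qed
qed

lemma left_step:
  fixes p :: "('a::finite) pair"
  assumes I: "Inv p"
  shows "Inv (left_rauzy_move e p) \<and> qf_equiv (Qform p) (Qform (left_rauzy_move e p))"
proof -
  define n where "n = CARD('a)"
  define pe where "pe = row p e"
  define po where "po = row p (\<not> e)"
  define z where "z = inv_into UNIV pe 1"
  define po' where "po' = (\<lambda>b. if po b = 1 then po z - 1
                    else if 1 < po b \<and> po b < po z then po b - 1
                    else po b)"
  have q: "left_rauzy_move e p = mk_pair e pe po'"
    unfolding left_rauzy_move_def Let_def pe_def po_def z_def po'_def by simp
  have bpe: "bij_betw pe UNIV {1..n}" and bpo: "bij_betw po UNIV {1..n}"
    using is_pair_row[of p e] is_pair_row[of p "\<not> e"] I unfolding Inv_def pe_def po_def n_def by blast+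
  note fe = bij_facts[OF bpe[unfolded n_def], folded n_def]
  note fo = bij_facts[OF bpo[unfolded n_def], folded n_def]
  have n1: "1 \<le> n" by (simp add: n_def card_pos)
  have z: "pe z = 1" unfolding z_def using fe(3) n1 by simp
  define w where "w = inv_into UNIV po 1"
  have w: "po w = 1" unfolding w_def using fo(3) n1 by simp
  have F: "\<forall>x. \<not> (pe x = 1 \<and> po x = 1)" using I Fp_row[of p e] unfolding Inv_def pe_def po_def by blast
  have zw: "z \<noteq> w" using F z w by auto
  note RA = left_arith[OF fe(1) fo(1) fe(2) fo(2) z w zw po'_def]
  have inv: "Inv (left_rauzy_move e p)"
    unfolding Inv_def q
  proof
    show "is_pair (mk_pair e pe po')"
      using bpe bij_n[OF RA(1)] RA(2) unfolding n_def by (intro is_pair_mk) auto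
    have "\<And>x. pe x = 1 \<Longrightarrow> x = z" using fe(1) z by (metis injD)
    moreover have "po' z \<noteq> 1" unfolding po'_def using F z by auto
    ultimately show "Fp (mk_pair e pe po')" unfolding Fp_mk by auto
  qed
  have "qf_equiv (Qform p) (Qform (mk_pair e pe po'))"
    apply (rule move_equiv[of p po' _ e z w])
    using I RA zw unfolding Inv_def pe_def po_def by auto
  then show ?thesis using inv q by simp
qed

lemma step_lem: "Inv p \<Longrightarrow> rauzy_step p q \<Longrightarrow> Inv q \<and> qf_equiv (Qform p) (Qform q)"
  unfolding rauzy_step_def using right_step left_step by blast

lemma reach: assumes "rauzy_step\<^sup>*\<^sup>* p q" "Inv p" shows "Inv q \<and> qf_equiv (Qform p) (Qform q)"
  using assms
proof (induction rule: rtranclp_induct)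
  case base then show ?case by (simp add: qf_refl)
next
  case (step y z)
  then have "Inv y \<and> qf_equiv (Qform p) (Qform y)" by blast
  then show ?case using qf_trans step_lem step.hyps(2) by blast
qed



lemma comp_lin_bij:
  fixes \<sigma> :: "'b \<Rightarrow> 'a" and \<tau> :: "'a \<Rightarrow> 'b"
  assumes st: "\<And>a. \<sigma> (\<tau> a) = a" and ts: "\<And>b. \<tau> (\<sigma> b) = b"
  shows "z2_linear (\<lambda>u::'a \<Rightarrow> bit. u \<circ> \<sigma>)" "bij (\<lambda>u::'a \<Rightarrow> bit. u \<circ> \<sigma>)"
proof -
  show "z2_linear (\<lambda>u::'a \<Rightarrow> bit. u \<circ> \<sigma>)" unfolding z2_linear_def by (simp add: comp_def)
  show "bij (\<lambda>u::'a \<Rightarrow> bit. u \<circ> \<sigma>)"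
    by (rule o_bij[where g="\<lambda>v. v \<circ> \<tau>"]) (auto simp: fun_eq_iff st ts)
qed

lemma sum_reindex_inv:
  fixes \<sigma> :: "'b::finite \<Rightarrow> 'a::finite" and \<tau> :: "'a \<Rightarrow> 'b"
  assumes st: "\<And>a. \<sigma> (\<tau> a) = a" and ts: "\<And>b. \<tau> (\<sigma> b) = b"
  shows "(\<Sum>b\<in>UNIV. u (\<sigma> b)) = (\<Sum>a\<in>UNIV. (u a :: 'c::comm_monoid_add))"
  by (rule sum.reindex_bij_witness[where i=\<tau> and j=\<sigma>]) (auto simp: st ts)

lemma Qform_card1:
  fixes q :: "('a::finite) pair"
  assumes "CARD('a) = 1"
  shows "Qform q v = (\<Sum>a\<in>UNIV. v a)"
proof -
  have "\<And>a b::'a. a = b" using assms card_le_Suc0_iff_eq[of "UNIV::'a set"] by auto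
  then have "Sf (fst q) = {}" by (auto simp: Sf_def)
  then show ?thesis by (simp add: Qform_alt)
qed

lemma card1_equiv:
  fixes p :: "('a::finite) pair" and q :: "('b::finite) pair"
  assumes "CARD('a) = 1" "CARD('b) = 1"
  shows "qf_equiv (Qform p) (Qform q)"
proof -
  have ea: "\<And>a b::'a. a = b" using assms(1) card_le_Suc0_iff_eq[of "UNIV::'a set"] by auto
  have eb: "\<And>a b::'b. a = b" using assms(2) card_le_Suc0_iff_eq[of "UNIV::'b set"] by auto
  define \<sigma> :: "'b \<Rightarrow> 'a" where "\<sigma> = (\<lambda>_. undefined)"
  define \<tau> :: "'a \<Rightarrow> 'b" where "\<tau> = (\<lambda>_. undefined)"
  have st: "\<And>a. \<sigma> (\<tau> a) = a" and ts: "\<And>b. \<tau> (\<sigma> b) = b" using ea eb by blast+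
  note LB = comp_lin_bij[OF st ts]
  have "Qform q \<circ> (\<lambda>u. u \<circ> \<sigma>) = Qform p"
    by (rule ext) (simp add: Qform_card1[OF assms(1)] Qform_card1[OF assms(2)] sum_reindex_inv[OF st ts])
  then show ?thesis unfolding qf_equiv_def using LB by blast
qed

lemma relabel:
  fixes q' :: "('a::finite) pair" and q :: "('b::finite) pair"
  assumes pq': "is_pair q'" and pq: "is_pair q" and eq: "perm_of q = perm_of q'"
  shows "qf_equiv (Qform q') (Qform q)"
proof -
  define n where "n = CARD('a)"
  have cb: "CARD('b) = n" using arg_cong[OF eq, of length] by (simp add: perm_of_def n_def)
  have b1: "bij_betw (fst q') UNIV {1..n}" "bij_betw (snd q') UNIV {1..n}"
    using pq' unfolding is_pair_def n_def by auto
  have b2: "bij_betw (fst q) UNIV {1..n}" "bij_betw (snd q) UNIV {1..n}"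
    using pq unfolding is_pair_def cb by auto
  note f1 = bij_facts[OF b1(1)[unfolded n_def], folded n_def]
  note f2 = bij_facts[OF b2(1)[unfolded cb[symmetric]], unfolded cb]
  note g1 = bij_facts[OF b1(2)[unfolded n_def], folded n_def]
  note g2 = bij_facts[OF b2(2)[unfolded cb[symmetric]], unfolded cb]
  define \<sigma> where "\<sigma> = (\<lambda>b. inv_into UNIV (fst q') (fst q b))"
  define \<tau> where "\<tau> = (\<lambda>a. inv_into UNIV (fst q) (fst q' a))"
  have fs: "\<And>b. fst q' (\<sigma> b) = fst q b" unfolding \<sigma>_def using f1(3) f2(2) by auto
  have ft: "\<And>a. fst q (\<tau> a) = fst q' a" unfolding \<tau>_def using f2(3) f1(2) by auto
  have ts: "\<And>b. \<tau> (\<sigma> b) = b" unfolding \<tau>_def using fs f2(1) by (simp add: inv_into_f_f)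
  have st: "\<And>a. \<sigma> (\<tau> a) = a" unfolding \<sigma>_def using ft f1(1) by (simp add: inv_into_f_f)
  have ss: "\<And>b. snd q' (\<sigma> b) = snd q b"
  proof -
    fix b
    define i where "i = fst q b - 1"
    have i: "i < n" "Suc i = fst q b" using f2(2)[of b] unfolding i_def by auto
    have "perm_of q ! i = snd q (inv_into UNIV (fst q) (fst q b))"
      unfolding perm_of_def cb using i by (simp del: upt_Suc)
    moreover have "perm_of q' ! i = snd q' (\<sigma> b)"
      unfolding perm_of_def \<sigma>_def n_def[symmetric] using i by (simp del: upt_Suc)
    ultimately show "snd q' (\<sigma> b) = snd q b" using eq f2(1) by (simp add: inv_into_f_f)
  qed
  have Lq: "\<And>b c. ell q b c = ell q' (\<sigma> b) (\<sigma> c)"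
    unfolding ell_def L_pair_def fs ss by simp
  note LB = comp_lin_bij[OF st ts]
  have "Qform q (u \<circ> \<sigma>) = Qform q' u" for u
  proof -
    have "(\<Sum>(b,c)\<in>Sf (fst q). ell q b c * (u \<circ> \<sigma>) b * (u \<circ> \<sigma>) c)
        = (\<Sum>(a,a')\<in>Sf (fst q'). ell q' a a' * u a * u a')"
    proof (rule sum.reindex_bij_witness[where i="map_prod \<tau> \<tau>" and j="map_prod \<sigma> \<sigma>"])
      show "\<And>x. x \<in> Sf (fst q) \<Longrightarrow> map_prod \<tau> \<tau> (map_prod \<sigma> \<sigma> x) = x" by (auto simp: ts)
      show "\<And>x. x \<in> Sf (fst q') \<Longrightarrow> map_prod \<sigma> \<sigma> (map_prod \<tau> \<tau> x) = x" by (auto simp: st)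
      show "\<And>x. x \<in> Sf (fst q) \<Longrightarrow> map_prod \<sigma> \<sigma> x \<in> Sf (fst q')"
        unfolding Sf_def using fs ts by (auto) (metis)
      show "\<And>x. x \<in> Sf (fst q') \<Longrightarrow> map_prod \<tau> \<tau> x \<in> Sf (fst q)"
        unfolding Sf_def using ft st by (auto) (metis)
      show "\<And>x. x \<in> Sf (fst q) \<Longrightarrow> (case map_prod \<sigma> \<sigma> x of (a, a') \<Rightarrow> ell q' a a' * u a * u a') =
              (case x of (b, c) \<Rightarrow> ell q b c * (u \<circ> \<sigma>) b * (u \<circ> \<sigma>) c)"
        by (auto simp: Lq)
    qed
    then show ?thesis unfolding Qform_alt using sum_reindex_inv[OF st ts, of u] by (simp add: comp_def)
  qed
  then have "Qform q \<circ> (\<lambda>u. u \<circ> \<sigma>) = Qform q'" by (simp add: fun_eq_iff)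
  then show ?thesis unfolding qf_equiv_def using LB by blast
qed



lemma Inv_init:
  fixes p :: "('a::finite) pair"
  assumes "is_pair p" "irreducible_pair p" "2 \<le> CARD('a)"
  shows "Inv p"
proof -
  have irr: "\<forall>k. 1 \<le> k \<and> k < CARD('a) \<longrightarrow> fst p -` {1..k} \<noteq> snd p -` {1..k}"
    using assms(2) unfolding irreducible_pair_def by blast
  have ne: "fst p -` {1..1} \<noteq> snd p -` {1..1}" using irr[rule_format, of 1] assms(3) by simp
  have i1: "inj (fst p)" "inj (snd p)" using assms(1) unfolding is_pair_def by (auto dest: bij_betw_imp_inj_on)
  have "Fp p" unfolding Fp_def
  proof (intro allI notI)
    fix x assume x: "fst p x = 1 \<and> snd p x = 1"
    have "fst p -` {1..1} = {x}" using x i1(1) by (auto simp: inj_eq[symmetric, of "fst p"])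
    moreover have "snd p -` {1..1} = {x}" using x i1(2) by (auto simp: inj_eq[symmetric, of "snd p"])
    ultimately show False using ne by simp
  qed
  then show ?thesis using assms(1) by (simp add: Inv_def)
qed

theorem proposition2p17:
  fixes p :: "('a::finite) pair"
  assumes "is_pair p" and "irreducible_pair p"
  shows "(\<forall>q \<in> ext_rauzy_class p. qf_equiv (Qform p) (Qform q)) \<and>
         (\<forall>q :: ('b::finite) pair. is_pair q \<and> perm_of q \<in> nonlabeled_ext_rauzy_class p
              \<longrightarrow> qf_equiv (Qform p) (Qform q))"
proof (cases "CARD('a) = 1")
  case True
  show ?thesis
  proof (intro conjI ballI allI impI)
    fix q assume "q \<in> ext_rauzy_class p"
    show "qf_equiv (Qform p) (Qform q)" using card1_equiv[OF True True] .
  next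
    fix q :: "'b pair" assume "is_pair q \<and> perm_of q \<in> nonlabeled_ext_rauzy_class p"
    then obtain q' :: "'a pair" where "perm_of q = perm_of q'" unfolding nonlabeled_ext_rauzy_class_def by auto
    then have "length (perm_of q) = length (perm_of q')" by simp
    then have "CARD('b) = CARD('a)" unfolding perm_of_def by (simp del: upt_Suc)
    then show "qf_equiv (Qform p) (Qform q)" using card1_equiv[OF True] True by simp
  qed
next
  case False
  then have "2 \<le> CARD('a)" using card_pos[where 'a='a] by linarith
  then have I: "Inv p" using Inv_init assms by blast
  show ?thesis
  proof (intro conjI ballI allI impI)
    fix q assume "q \<in> ext_rauzy_class p"
    then show "qf_equiv (Qform p) (Qform q)" using reach I unfolding ext_rauzy_class_def by blast
  next
    fix q :: "'b pair" assume H: "is_pair q \<and> perm_of q \<in> nonlabeled_ext_rauzy_class p"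
    then obtain q' where q': "q' \<in> ext_rauzy_class p" "perm_of q = perm_of q'"
      unfolding nonlabeled_ext_rauzy_class_def by auto
    then have R: "Inv q' \<and> qf_equiv (Qform p) (Qform q')" using reach I unfolding ext_rauzy_class_def by blast
    then have "qf_equiv (Qform q') (Qform q)" using relabel[of q' q] H q'(2) by (simp add: Inv_def)
    then show "qf_equiv (Qform p) (Qform q)" using R qf_trans by blast
  qed
qed

end
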